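(* Let $\mathcal{B}$ be a real Banach space, $\mathcal{P}$ a cone over $\mathcal{B}$ with induced partial order $\preceq$, let $\mathcal{Q}$ be a real vector space and $d$ a quasi-cone metric on $\mathcal{Q}$ with values in $\mathcal{B}$. Let $H$ be a non-empty subset of $\mathcal{Q}$. Then $H$ is a backward pseudo Chebyshev subset of $\mathcal{Q}$ if and only if there do not exist $q\in\mathcal{Q}$, infinitely many linearly independent elements $\{h_n\}_{n\in\mathbb{N}}\subseteq H$, and a function $f:\mathcal{Q}\to\mathcal{B}$ such that for all $n\in\mathbb{N}$: $f(h_n)=d(h_n,q)$, $\{f(h)-f(h_n): h\in H\}\subseteq\mathcal{P}$, and $\{d(h,q)-f(h): h\in H\}\subseteq\mathcal{P}$.
   Context: A cone over a real Banach space $\mathcal{B}$ is a subset $\mathcal{P}\subseteq\mathcal{B}$ that is closed, $\mathcal{P}\neq\{0_\mathcal{B}\}$, satisfies $ax+by\in\mathcal{P}$ for all $x,y\in\mathcal{P}$ and $a,b\geq 0$, and such that $x\in\mathcal{P}$ and $-x\in\mathcal{P}$ imply $x=0_\mathcal{B}$. For $r,s\in\mathcal{B}$, $s\preceq r$ means $r-s\in\mathcal{P}$. A quasi-cone metric on a set $\mathcal{Q}$ is a map $d:\mathcal{Q}\times\mathcal{Q}\to\mathcal{B}$ such that for all $r,s,t\in\mathcal{Q}$: $d(r,s)\succeq 0_\mathcal{B}$; $d(r,s)=0_\mathcal{B}$ iff $r=s$; $d(r,t)\preceq d(r,s)+d(s,t)$. For non-empty $H\subseteq\mathcal{Q}$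 and $q\in\mathcal{Q}$, $\mathcal{P}_{H_b}(q)$ is the set of all $h_b\in H$ with $d(h_b,q)\preceq d(h,q)$ for all $h\in H$. A non-empty $H\subseteq\mathcal{Q}$ is a backward pseudo Chebyshev subset of $\mathcal{Q}$ if for every $q\in\mathcal{Q}$ the set $\mathcal{P}_{H_b}(q)$ does not contain infinitely many linearly independent elements. *)

theory Defs
  imports "HOL-Analysis.Analysis"
begin

definition is_cone :: "'b::banach set \<Rightarrow> bool" where
  "is_cone P \<longleftrightarrow> closed P \<and> P \<noteq> {0} \<and>
     (\<forall>x\<in>P. \<forall>y\<in>P. \<forall>a::real. \<forall>b::real. a \<ge> 0 \<and> b \<ge> 0 \<longrightarrow> a *\<^sub>R x + b *\<^sub>R y \<in> P) \<and>
     (\<forall>x. x \<in> P \<and> - x \<in> P \<longrightarrow> x = 0)"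

definition cone_le :: "'b::banach set \<Rightarrow> 'b \<Rightarrow> 'b \<Rightarrow> bool" where
  "cone_le P s r \<longleftrightarrow> r - s \<in> P"

definition quasi_cone_metric :: "'b::banach set \<Rightarrow> ('q \<Rightarrow> 'q \<Rightarrow> 'b) \<Rightarrow> bool" where
  "quasi_cone_metric P d \<longleftrightarrow>
     (\<forall>r s. cone_le P 0 (d r s)) \<and>
     (\<forall>r s. d r s = 0 \<longleftrightarrow> r = s) \<and>
     (\<forall>r s t. cone_le P (d r t) (d r s + d s t))"

definition backward_best_approx ::
  "'b::banach set \<Rightarrow> ('q \<Rightarrow> 'q \<Rightarrow> 'b) \<Rightarrow> 'q set \<Rightarrow> 'q \<Rightarrow> 'q set" where
  "backward_best_approx P d H q = {hb \<in> H. \<forall>h\<in>H. cone_le P (d hb q) (d h q)}"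

definition backward_pseudo_chebyshev ::
  "'b::banach set \<Rightarrow> ('q::real_vector \<Rightarrow> 'q \<Rightarrow> 'b) \<Rightarrow> 'q set \<Rightarrow> bool" where
  "backward_pseudo_chebyshev P d H \<longleftrightarrow> H \<noteq> {} \<and>
     (\<forall>q. \<not> (\<exists>S. S \<subseteq> backward_best_approx P d H q \<and> infinite S \<and> independent S))"

end

theory Submission
  imports Defs
begin

theorem theorem8:
  fixes P :: "'b::banach set"
    and d :: "'q::real_vector \<Rightarrow> 'q \<Rightarrow> 'b"
    and H :: "'q set"
  assumes "is_cone P"
    and "quasi_cone_metric P d"
    and "H \<noteq> {}"
  shows "backward_pseudo_chebyshev P d H \<longleftrightarrow>
    \<not> (\<exists>q. \<exists>hs :: nat \<Rightarrow> 'q. \<exists>f :: 'q \<Rightarrow> 'b.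
          inj hs \<and> range hs \<subseteq> H \<and> independent (range hs) \<and>
          (\<forall>n. f (hs n) = d (hs n) q \<and>
               {f h - f (hs n) | h. h \<in> H} \<subseteq> P \<and>
               {d h q - f h | h. h \<in> H} \<subseteq> P))"
proof
  have add: "x + y \<in> P" if "x \<in> P" "y \<in> P" for x y
    using assms(1) that unfolding is_cone_def
    by (metis order_refl scaleR_one zero_le_one)
  have antisym: "x = 0" if "x \<in> P" "- x \<in> P" for x
    using assms(1) that unfolding is_cone_def by blast
  have zero: "0 \<in> P"
  proof -
    obtain r s where "cone_le P 0 (d r s)" using assms(2) unfolding quasi_cone_metric_def by blast
    hence x: "d r s \<in> P" unfolding cone_le_def by simp
    have "(0::real) *\<^sub>R d r s + (0::real) *\<^sub>R d r s \<in> P"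
      using assms(1) x unfolding is_cone_def by blast
    thus ?thesis by simp
  qed
  {
    assume C: "backward_pseudo_chebyshev P d H"
    show "\<not> (\<exists>q. \<exists>hs :: nat \<Rightarrow> 'q. \<exists>f :: 'q \<Rightarrow> 'b.
          inj hs \<and> range hs \<subseteq> H \<and> independent (range hs) \<and>
          (\<forall>n. f (hs n) = d (hs n) q \<and>
               {f h - f (hs n) | h. h \<in> H} \<subseteq> P \<and>
               {d h q - f h | h. h \<in> H} \<subseteq> P))"
    proof
      assume "\<exists>q. \<exists>hs :: nat \<Rightarrow> 'q. \<exists>f :: 'q \<Rightarrow> 'b.
          inj hs \<and> range hs \<subseteq> H \<and> independent (range hs) \<and>
          (\<forall>n. f (hs n) = d (hs n) q \<and>
               {f h - f (hs n) | h. h \<in> H} \<subseteq> P \<and>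
               {d h q - f h | h. h \<in> H} \<subseteq> P)"
      then obtain q and hs :: "nat \<Rightarrow> 'q" and f :: "'q \<Rightarrow> 'b" where i: "inj hs" and r: "range hs \<subseteq> H" and ind: "independent (range hs)"
        and F: "\<And>n. f (hs n) = d (hs n) q \<and>
               {f h - f (hs n) | h. h \<in> H} \<subseteq> P \<and>
               {d h q - f h | h. h \<in> H} \<subseteq> P" by blast
      have "range hs \<subseteq> backward_best_approx P d H q"
      proof
        fix x assume "x \<in> range hs"
        then obtain n where xn: "x = hs n" by blast
        have "\<forall>h\<in>H. cone_le P (d x q) (d h q)"
        proof
          fix h assume h: "h \<in> H"
          have a: "f h - f (hs n) \<in> P" using F[of n] h by blast
          have b: "d h q - f h \<in> P" using F[of n] h by blast
          have "(d h q - f h) + (f h - f (hs n)) \<in> P" using add a b by blast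
          thus "cone_le P (d x q) (d h q)" using F[of n] xn unfolding cone_le_def by simp
        qed
        thus "x \<in> backward_best_approx P d H q"
          using r xn unfolding backward_best_approx_def by auto
      qed
      moreover have "infinite (range hs)" using i by (simp add: range_inj_infinite)
      ultimately show False using C ind unfolding backward_pseudo_chebyshev_def by blast
    qed
  }
  {
    assume N: "\<not> (\<exists>q. \<exists>hs :: nat \<Rightarrow> 'q. \<exists>f :: 'q \<Rightarrow> 'b.
          inj hs \<and> range hs \<subseteq> H \<and> independent (range hs) \<and>
          (\<forall>n. f (hs n) = d (hs n) q \<and>
               {f h - f (hs n) | h. h \<in> H} \<subseteq> P \<and>
               {d h q - f h | h. h \<in> H} \<subseteq> P))"
    show "backward_pseudo_chebyshev P d H"
      unfolding backward_pseudo_chebyshev_def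
    proof (rule conjI[OF assms(3)], rule allI, rule notI)
      fix q
      assume "\<exists>S. S \<subseteq> backward_best_approx P d H q \<and> infinite S \<and> independent S"
      then obtain S where S: "S \<subseteq> backward_best_approx P d H q" "infinite S" "independent S" by blast
      obtain hs :: "nat \<Rightarrow> 'q" where hs: "inj hs" "range hs \<subseteq> S"
        using infinite_countable_subset[OF S(2)] by blast
      have ind: "independent (range hs)" using S(3) hs(2) independent_mono by blast
      have B: "\<And>n. hs n \<in> H \<and> (\<forall>h\<in>H. d h q - d (hs n) q \<in> P)"
        using hs(2) S(1) unfolding backward_best_approx_def cone_le_def by blast
      have rH: "range hs \<subseteq> H" using B by blast
      define f where "f = (\<lambda>h::'q. d (hs 0) q)"
      have "\<forall>n. f (hs n) = d (hs n) q \<and>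
               {f h - f (hs n) | h. h \<in> H} \<subseteq> P \<and>
               {d h q - f h | h. h \<in> H} \<subseteq> P"
      proof
        fix n
        have e1: "d (hs n) q - d (hs 0) q \<in> P" using B[of 0] B[of n] by blast
        have e2: "d (hs 0) q - d (hs n) q \<in> P" using B[of 0] B[of n] by blast
        have "d (hs n) q - d (hs 0) q = 0" using antisym[OF e1] e2 by (simp add: minus_diff_eq)
        hence "f (hs n) = d (hs n) q" unfolding f_def by simp
        moreover have "{f h - f (hs n) | h. h \<in> H} \<subseteq> P" unfolding f_def using zero by auto
        moreover have "{d h q - f h | h. h \<in> H} \<subseteq> P" unfolding f_def using B[of 0] by auto
        ultimately show "f (hs n) = d (hs n) q \<and>
               {f h - f (hs n) | h. h \<in> H} \<subseteq> P \<and>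
               {d h q - f h | h. h \<in> H} \<subseteq> P" by blast
      qed
      thus False using N hs(1) rH ind by blast
    qed
  }
qed

end
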